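(* Let $P$ be a finitely recursive normal program and let $\mathsf{CounterSupp}$ be complete with respect to $P$. Suppose that for some grounding substitution $\gamma$, the implication $(\bigwedge G\leftarrow\bigwedge H)\gamma$ holds in all stable models of $P$, where $G,H$ are finite sequences of literals. Then the h-goal $(G\mid H)$ has a successful skeptical derivation from $P$ and $\mathsf{CounterSupp}$ with restart goal $G$ and some answer substitution $\theta$ more general than $\gamma$ (i.e., $\gamma$ coincides on the variables of $G,H$ with $\theta\sigma$ for some substitution $\sigma$).
   Context: A normal program is a set of rules $A\leftarrow L_1,\dots,L_n$ ($A$ an atom, $L_i$ atoms or negated atoms $\mathtt{not}\,B$), possibly with function symbols; $\mathsf{Ground}(P)$ is its ground instantiation. $M$ (a set of ground atoms) is a stable model iff $M$ is the least model of the reduct $P^M$ obtained from $\mathsf{Ground}(P)$ by deleting rules with some $\mathtt{not}\,B$ in the body, $B\in M$, and deleting negative literals from the rest. The dependency graph has an edge from $A$ to each atom occurring in the body of a ground rule with head $A$; $A$ depends on $B$ if there is a path from $A$ to $B$ (each atom depends on itself); $P$ is finitely recursive iff each ground atom depends on finitely many atoms. For a literal $L$, $\bar L=\mathtt{not}\,A$ if $L=A$ and $\bar L=A$ if $L=\mathtt{not}\,A$. Supports: a support for a ground atom $A$ is a set of negative literals that is the final goal of an SLD derivation from $A$ using $\mathsf{Ground}(P)$ in which only positive literals are resolved, ending when no positive literal is left. A ground counter-support for $A$ is a set $K$ of ground atoms such that (1) every support $S$ of $A$ contains some $\mathtt{not}\,B$ with $B\in K$, and (2) for each $B\in K$ some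 support of $A$ contains $\mathtt{not}\,B$. A (generalized) counter-support for an atom $A$ is a pair $\langle K,\theta\rangle$, $K$ a set of atoms, $\theta$ a substitution, such that for every grounding substitution $\sigma$, $K\sigma$ is a ground counter-support for $A\theta\sigma$. $\mathsf{CounterSupp}$ is a function mapping each (possibly nonground) atom $A$ to a set of finite generalized counter-supports for $A$; it is complete iff for every atom $A$, every ground instance $A\gamma$ and every ground counter-support $K$ of $A\gamma$ there are $\langle K',\theta\rangle\in\mathsf{CounterSupp}(A)$ and $\sigma$ with $A\theta\sigma=A\gamma$ and $K'\sigma=K$. Calculus: an h-goal is a pair $(G\mid H)$ of finite sequences of literals; an s-goal is a finite sequence of h-goals. A skeptical derivation from $P$ and $\mathsf{CounterSupp}$ with restart goal $G_0$ is a sequence of s-goals $\Gamma_0,\Gamma_1,\dots$ with $\Gamma_0=(G_0\mid H_0)$, each obtained from the previous one by one of the rules below ($\Gamma,\Delta$ are arbitrary s-goal contexts): Resolution (program): if $L_i$ is an atom, $A\leftarrow B_1,\dots,B_k$ a renamed-apart variant of a rule of $P$, $\theta$ an mgu of $L_i$ and $A$: rewrite $\Gamma\,(L_1\dots L_{i-1},L_i,L_{i+1}\dots L_n\mid H)\,\Delta$ into $[\Gamma\,(L_1\dots L_{i-1},B_1,\dots,B_k,L_{i+1}\dots L_n\mid H)\,\Delta]\theta$. Resolution (hypothesis): if $L'$ is in the hypotheses and $\theta$ an mgu of $L_i$ and $L'$: rewrite $\Gamma\,(L_1\dots L_n\mid H,L')\,\Delta$ into $[\Gamma\,(L_1\dots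 L_{i-1},L_{i+1}\dots L_n\mid H,L')\,\Delta]\theta$. Contradiction: rewrite $\Gamma\,(G\mid H,L)\,\Delta$ into $\Gamma\,(\bar L\mid H,L)\,\Delta$. Split: for any literal $L$, rewrite $\Gamma\,(G\mid H)\,\Delta$ into $\Gamma\,(G\mid H,L)\,(G_0\sigma\mid H,\bar L)\,\Delta$, where $\sigma$ is the composition of the mgus/substitutions computed so far in the derivation. Success: rewrite $\Gamma\,(\Box\mid H)\,\Delta$ into $\Gamma\,\Delta$ ($\Box$ the empty goal). Failure: if $L_i=\mathtt{not}\,A$ and $\langle\{B_1,\dots,B_k\},\theta\rangle\in\mathsf{CounterSupp}(A)$: rewrite $\Gamma\,(L_1\dots L_{i-1},L_i,L_{i+1}\dots L_n\mid H)\,\Delta$ into $[\Gamma\,(L_1\dots L_{i-1},B_1,\dots,B_k,L_{i+1}\dots L_n\mid H)\,\Delta]\theta$. A derivation is successful if its last s-goal is empty; its answer substitution is the composition of the substitutions applied along it (restricted to the variables of the initial h-goal). *)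

theory Defs
  imports Main
begin

datatype ('f,'v) trm = Var 'v | Fun 'f "('f,'v) trm list"
datatype ('p,'f,'v) atom = Atom 'p "('f,'v) trm list"
datatype ('p,'f,'v) lit = Pos "('p,'f,'v) atom" | Neg "('p,'f,'v) atom"

type_synonym ('f,'v) subst = "'v \<Rightarrow> ('f,'v) trm"
type_synonym ('p,'f,'v) rule = "('p,'f,'v) atom \<times> ('p,'f,'v) lit list"
text \<open>h-goal (G | H) and s-goal (list of h-goals).\<close>
type_synonym ('p,'f,'v) hgoal = "('p,'f,'v) lit list \<times> ('p,'f,'v) lit list"
type_synonym ('p,'f,'v) sgoal = "('p,'f,'v) hgoal list"

fun subst_trm :: "('f,'v) trm \<Rightarrow> ('f,'v) subst \<Rightarrow> ('f,'v) trm" where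
  "subst_trm (Var x) \<sigma> = \<sigma> x"
| "subst_trm (Fun f ts) \<sigma> = Fun f (map (\<lambda>t. subst_trm t \<sigma>) ts)"

fun vars_trm :: "('f,'v) trm \<Rightarrow> 'v set" where
  "vars_trm (Var x) = {x}"
| "vars_trm (Fun f ts) = (\<Union>t\<in>set ts. vars_trm t)"

fun subst_atom :: "('p,'f,'v) atom \<Rightarrow> ('f,'v) subst \<Rightarrow> ('p,'f,'v) atom" where
  "subst_atom (Atom p ts) \<sigma> = Atom p (map (\<lambda>t. subst_trm t \<sigma>) ts)"

fun vars_atom :: "('p,'f,'v) atom \<Rightarrow> 'v set" where
  "vars_atom (Atom p ts) = (\<Union>t\<in>set ts. vars_trm t)"

fun subst_lit :: "('p,'f,'v) lit \<Rightarrow> ('f,'v) subst \<Rightarrow> ('p,'f,'v) lit" where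
  "subst_lit (Pos A) \<sigma> = Pos (subst_atom A \<sigma>)"
| "subst_lit (Neg A) \<sigma> = Neg (subst_atom A \<sigma>)"

fun atom_of :: "('p,'f,'v) lit \<Rightarrow> ('p,'f,'v) atom" where
  "atom_of (Pos A) = A"
| "atom_of (Neg A) = A"

fun neg_lit :: "('p,'f,'v) lit \<Rightarrow> ('p,'f,'v) lit" where
  "neg_lit (Pos A) = Neg A"
| "neg_lit (Neg A) = Pos A"

definition vars_lit :: "('p,'f,'v) lit \<Rightarrow> 'v set" where
  "vars_lit L = vars_atom (atom_of L)"

definition vars_lits :: "('p,'f,'v) lit list \<Rightarrow> 'v set" where
  "vars_lits Ls = (\<Union>L\<in>set Ls. vars_lit L)"

definition subst_lits :: "('p,'f,'v) lit list \<Rightarrow> ('f,'v) subst \<Rightarrow> ('p,'f,'v) lit list" where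
  "subst_lits Ls \<sigma> = map (\<lambda>L. subst_lit L \<sigma>) Ls"

definition subst_rule :: "('p,'f,'v) rule \<Rightarrow> ('f,'v) subst \<Rightarrow> ('p,'f,'v) rule" where
  "subst_rule r \<sigma> = (subst_atom (fst r) \<sigma>, subst_lits (snd r) \<sigma>)"

definition vars_rule :: "('p,'f,'v) rule \<Rightarrow> 'v set" where
  "vars_rule r = vars_atom (fst r) \<union> vars_lits (snd r)"

definition subst_hgoal :: "('p,'f,'v) hgoal \<Rightarrow> ('f,'v) subst \<Rightarrow> ('p,'f,'v) hgoal" where
  "subst_hgoal g \<sigma> = (subst_lits (fst g) \<sigma>, subst_lits (snd g) \<sigma>)"

definition vars_hgoal :: "('p,'f,'v) hgoal \<Rightarrow> 'v set" where
  "vars_hgoal g = vars_lits (fst g) \<union> vars_lits (snd g)"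

definition subst_sgoal :: "('p,'f,'v) sgoal \<Rightarrow> ('f,'v) subst \<Rightarrow> ('p,'f,'v) sgoal" where
  "subst_sgoal gs \<sigma> = map (\<lambda>g. subst_hgoal g \<sigma>) gs"

definition vars_sgoal :: "('p,'f,'v) sgoal \<Rightarrow> 'v set" where
  "vars_sgoal gs = (\<Union>g\<in>set gs. vars_hgoal g)"

text \<open>Composition: first sigma, then theta.\<close>
definition comp_subst :: "('f,'v) subst \<Rightarrow> ('f,'v) subst \<Rightarrow> ('f,'v) subst" where
  "comp_subst \<sigma> \<theta> = (\<lambda>x. subst_trm (\<sigma> x) \<theta>)"

definition ground_atom :: "('p,'f,'v) atom \<Rightarrow> bool" where
  "ground_atom A \<longleftrightarrow> vars_atom A = {}"

definition grounding :: "('f,'v) subst \<Rightarrow> bool" where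
  "grounding \<sigma> \<longleftrightarrow> (\<forall>x. vars_trm (\<sigma> x) = {})"

definition ground_prog :: "('p,'f,'v) rule set \<Rightarrow> ('p,'f,'v) rule set" where
  "ground_prog P = {subst_rule r \<sigma> | r \<sigma>. r \<in> P \<and> vars_rule (subst_rule r \<sigma>) = {}}"

definition reduct :: "('p,'f,'v) rule set \<Rightarrow> ('p,'f,'v) atom set
    \<Rightarrow> (('p,'f,'v) atom \<times> ('p,'f,'v) atom list) set" where
  "reduct P M = {(A, [atom_of L. L \<leftarrow> Bs, \<exists>B. L = Pos B]) | A Bs.
      (A, Bs) \<in> ground_prog P \<and> (\<forall>B. Neg B \<in> set Bs \<longrightarrow> B \<notin> M)}"

inductive_set least_model :: "(('p,'f,'v) atom \<times> ('p,'f,'v) atom list) set \<Rightarrow> ('p,'f,'v) atom set"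
  for R where
  lm_rule: "(A, Bs) \<in> R \<Longrightarrow> (\<forall>B\<in>set Bs. B \<in> least_model R) \<Longrightarrow> A \<in> least_model R"

definition stable_model :: "('p,'f,'v) rule set \<Rightarrow> ('p,'f,'v) atom set \<Rightarrow> bool" where
  "stable_model P M \<longleftrightarrow> M = least_model (reduct P M)"

fun lit_true :: "('p,'f,'v) atom set \<Rightarrow> ('p,'f,'v) lit \<Rightarrow> bool" where
  "lit_true M (Pos A) \<longleftrightarrow> A \<in> M"
| "lit_true M (Neg A) \<longleftrightarrow> A \<notin> M"

definition dep_edge :: "('p,'f,'v) rule set \<Rightarrow> ('p,'f,'v) atom \<Rightarrow> ('p,'f,'v) atom \<Rightarrow> bool" where
  "dep_edge P A B \<longleftrightarrow> (\<exists>Bs. (A, Bs) \<in> ground_prog P \<and> B \<in> atom_of ` set Bs)"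

definition finitely_recursive :: "('p,'f,'v) rule set \<Rightarrow> bool" where
  "finitely_recursive P \<longleftrightarrow>
     (\<forall>A. ground_atom A \<longrightarrow> finite {B. (dep_edge P)\<^sup>*\<^sup>* A B})"

definition supp_step :: "('p,'f,'v) rule set \<Rightarrow> ('p,'f,'v) lit list \<Rightarrow> ('p,'f,'v) lit list \<Rightarrow> bool" where
  "supp_step P Gs Gs' \<longleftrightarrow> (\<exists>xs A ys Bs. Gs = xs @ Pos A # ys \<and> (A, Bs) \<in> ground_prog P
      \<and> Gs' = xs @ Bs @ ys)"

definition is_support :: "('p,'f,'v) rule set \<Rightarrow> ('p,'f,'v) atom \<Rightarrow> ('p,'f,'v) lit set \<Rightarrow> bool" where
  "is_support P A S \<longleftrightarrow> (\<exists>Gs. (supp_step P)\<^sup>*\<^sup>* [Pos A] Gs \<and> (\<forall>L\<in>set Gs. \<exists>B. L = Neg B)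
      \<and> S = set Gs)"

definition ground_counter_support :: "('p,'f,'v) rule set \<Rightarrow> ('p,'f,'v) atom set \<Rightarrow> ('p,'f,'v) atom \<Rightarrow> bool" where
  "ground_counter_support P K A \<longleftrightarrow>
     (\<forall>B\<in>K. ground_atom B)
     \<and> (\<forall>S. is_support P A S \<longrightarrow> (\<exists>B\<in>K. Neg B \<in> S))
     \<and> (\<forall>B\<in>K. \<exists>S. is_support P A S \<and> Neg B \<in> S)"

text \<open>Generalized counter-support (K, theta) for A, K a finite set of atoms given as a list.\<close>
definition gen_counter_support :: "('p,'f,'v) rule set \<Rightarrow> ('p,'f,'v) atom
    \<Rightarrow> ('p,'f,'v) atom list \<times> ('f,'v) subst \<Rightarrow> bool" where
  "gen_counter_support P A c \<longleftrightarrow>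
     (\<forall>\<sigma>. grounding \<sigma> \<longrightarrow>
        ground_counter_support P ((\<lambda>B. subst_atom B \<sigma>) ` set (fst c))
          (subst_atom (subst_atom A (snd c)) \<sigma>))"

definition counter_supp_fun :: "('p,'f,'v) rule set
    \<Rightarrow> (('p,'f,'v) atom \<Rightarrow> (('p,'f,'v) atom list \<times> ('f,'v) subst) set) \<Rightarrow> bool" where
  "counter_supp_fun P CS \<longleftrightarrow> (\<forall>A. \<forall>c\<in>CS A. gen_counter_support P A c)"

definition cs_complete :: "('p,'f,'v) rule set
    \<Rightarrow> (('p,'f,'v) atom \<Rightarrow> (('p,'f,'v) atom list \<times> ('f,'v) subst) set) \<Rightarrow> bool" where
  "cs_complete P CS \<longleftrightarrow>
     (\<forall>A \<gamma> K. ground_atom (subst_atom A \<gamma>) \<longrightarrow> ground_counter_support P K (subst_atom A \<gamma>) \<longrightarrow>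
        (\<exists>c\<in>CS A. \<exists>\<sigma>. subst_atom (subst_atom A (snd c)) \<sigma> = subst_atom A \<gamma>
                     \<and> (\<lambda>B. subst_atom B \<sigma>) ` set (fst c) = K))"

definition is_mgu_lit :: "('f,'v) subst \<Rightarrow> ('p,'f,'v) lit \<Rightarrow> ('p,'f,'v) lit \<Rightarrow> bool" where
  "is_mgu_lit \<theta> L L' \<longleftrightarrow> subst_lit L \<theta> = subst_lit L' \<theta>
     \<and> (\<forall>\<tau>. subst_lit L \<tau> = subst_lit L' \<tau> \<longrightarrow> (\<exists>\<delta>. \<forall>x. \<tau> x = subst_trm (\<theta> x) \<delta>))"

definition variant :: "('p,'f,'v) rule \<Rightarrow> ('p,'f,'v) rule \<Rightarrow> bool" where
  "variant r r' \<longleftrightarrow> (\<exists>\<pi>. bij \<pi> \<and> r' = subst_rule r (\<lambda>x. Var (\<pi> x)))"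

text \<open>States: (current s-goal, composition of substitutions so far, variables used so far).
  G0 is the restart goal.\<close>
inductive sk_step :: "('p,'f,'v) rule set
    \<Rightarrow> (('p,'f,'v) atom \<Rightarrow> (('p,'f,'v) atom list \<times> ('f,'v) subst) set)
    \<Rightarrow> ('p,'f,'v) lit list
    \<Rightarrow> ('p,'f,'v) sgoal \<times> ('f,'v) subst \<times> 'v set
    \<Rightarrow> ('p,'f,'v) sgoal \<times> ('f,'v) subst \<times> 'v set \<Rightarrow> bool"
  for P CS G0 where
  res_prog:
  "\<lbrakk> r \<in> P; variant r (A, Bs);
     vars_rule (A, Bs) \<inter> (U \<union> vars_sgoal (\<Gamma> @ (Ls1 @ Pos A0 # Ls2, H) # \<Delta>)) = {};
     is_mgu_lit \<theta> (Pos A0) (Pos A);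
     \<Gamma>' = subst_sgoal (\<Gamma> @ (Ls1 @ Bs @ Ls2, H) # \<Delta>) \<theta> \<rbrakk>
   \<Longrightarrow> sk_step P CS G0 (\<Gamma> @ (Ls1 @ Pos A0 # Ls2, H) # \<Delta>, \<sigma>, U)
         (\<Gamma>', comp_subst \<sigma> \<theta>, U \<union> vars_rule (A, Bs) \<union> vars_sgoal \<Gamma>')"
| res_hyp:
  "\<lbrakk> L' \<in> set H; is_mgu_lit \<theta> L L';
     \<Gamma>' = subst_sgoal (\<Gamma> @ (Ls1 @ Ls2, H) # \<Delta>) \<theta> \<rbrakk>
   \<Longrightarrow> sk_step P CS G0 (\<Gamma> @ (Ls1 @ L # Ls2, H) # \<Delta>, \<sigma>, U)
         (\<Gamma>', comp_subst \<sigma> \<theta>, U \<union> vars_sgoal \<Gamma>')"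
| contradiction:
  "\<lbrakk> L \<in> set H; \<Gamma>' = \<Gamma> @ ([neg_lit L], H) # \<Delta> \<rbrakk>
   \<Longrightarrow> sk_step P CS G0 (\<Gamma> @ (G, H) # \<Delta>, \<sigma>, U) (\<Gamma>', \<sigma>, U \<union> vars_sgoal \<Gamma>')"
| split:
  "\<Gamma>' = \<Gamma> @ (G, H @ [L]) # (subst_lits G0 \<sigma>, H @ [neg_lit L]) # \<Delta>
   \<Longrightarrow> sk_step P CS G0 (\<Gamma> @ (G, H) # \<Delta>, \<sigma>, U) (\<Gamma>', \<sigma>, U \<union> vars_sgoal \<Gamma>')"
| success:
  "sk_step P CS G0 (\<Gamma> @ ([], H) # \<Delta>, \<sigma>, U) (\<Gamma> @ \<Delta>, \<sigma>, U)"
| failure: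
  "\<lbrakk> (K, \<theta>) \<in> CS A;
     \<Gamma>' = subst_sgoal (\<Gamma> @ (Ls1 @ map Pos K @ Ls2, H) # \<Delta>) \<theta> \<rbrakk>
   \<Longrightarrow> sk_step P CS G0 (\<Gamma> @ (Ls1 @ Neg A # Ls2, H) # \<Delta>, \<sigma>, U)
         (\<Gamma>', comp_subst \<sigma> \<theta>, U \<union> vars_sgoal \<Gamma>')"

end

theory Submission
  imports Defs "HOL-Analysis.Function_Topology"
begin


lemma subst_trm_eq_iff: "subst_trm t s1 = subst_trm t s2 \<longleftrightarrow> (\<forall>x\<in>vars_trm t. s1 x = s2 x)"
  by (induction t) (auto simp: map_eq_conv)

lemma subst_trm_Var[simp]: "subst_trm t Var = t"
  by (induction t) (auto simp: map_idI)

lemma subst_trm_comp: "subst_trm (subst_trm t s) th = subst_trm t (comp_subst s th)"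
  by (induction t) (auto simp: comp_subst_def)

lemma vars_subst_trm: "vars_trm (subst_trm t s) = (\<Union>x\<in>vars_trm t. vars_trm (s x))"
  by (induction t) auto

lemma finite_vars_trm[simp]: "finite (vars_trm t)"
  by (induction t) auto

lemma ground_subst_trm: "vars_trm t = {} \<Longrightarrow> subst_trm t s = t"
  using subst_trm_eq_iff[of t s Var] by simp

lemma subst_atom_eq_iff: "subst_atom A s1 = subst_atom A s2 \<longleftrightarrow> (\<forall>x\<in>vars_atom A. s1 x = s2 x)"
  by (cases A) (auto simp: map_eq_conv subst_trm_eq_iff)

lemma subst_atom_Var[simp]: "subst_atom A Var = A"
  by (cases A) (auto simp: map_idI)

lemma subst_atom_comp: "subst_atom (subst_atom A s) th = subst_atom A (comp_subst s th)"
  by (cases A) (auto simp: subst_trm_comp)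

lemma vars_subst_atom: "vars_atom (subst_atom A s) = (\<Union>x\<in>vars_atom A. vars_trm (s x))"
  by (cases A) (auto simp: vars_subst_trm)

lemma finite_vars_atom[simp]: "finite (vars_atom A)"
  by (cases A) auto

lemma ground_subst_atom: "vars_atom A = {} \<Longrightarrow> subst_atom A s = A"
  using subst_atom_eq_iff[of A s Var] by simp

lemma atom_of_subst[simp]: "atom_of (subst_lit L s) = subst_atom (atom_of L) s"
  by (cases L) auto

lemma subst_lit_eq_iff: "subst_lit L s1 = subst_lit L s2 \<longleftrightarrow> (\<forall>x\<in>vars_lit L. s1 x = s2 x)"
  by (cases L) (auto simp: vars_lit_def subst_atom_eq_iff)

lemma subst_lit_Var[simp]: "subst_lit L Var = L"
  by (cases L) auto

lemma subst_lit_comp: "subst_lit (subst_lit L s) th = subst_lit L (comp_subst s th)"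
  by (cases L) (auto simp: subst_atom_comp)

lemma vars_subst_lit: "vars_lit (subst_lit L s) = (\<Union>x\<in>vars_lit L. vars_trm (s x))"
  by (simp add: vars_lit_def vars_subst_atom)

lemma finite_vars_lit[simp]: "finite (vars_lit L)"
  by (simp add: vars_lit_def)

lemma ground_subst_lit: "vars_lit L = {} \<Longrightarrow> subst_lit L s = L"
  using subst_lit_eq_iff[of L s Var] by simp

lemma subst_lits_Var[simp]: "subst_lits Ls Var = Ls"
  by (simp add: subst_lits_def)

lemma subst_lits_simps[simp]: "subst_lits [] s = []" "subst_lits (L # Ls) s = subst_lit L s # subst_lits Ls s"
  "subst_lits (Ls1 @ Ls2) s = subst_lits Ls1 s @ subst_lits Ls2 s"
  by (auto simp: subst_lits_def)

lemma vars_lits_simps[simp]: "vars_lits [] = {}" "vars_lits (L # Ls) = vars_lit L \<union> vars_lits Ls"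
  "vars_lits (Ls1 @ Ls2) = vars_lits Ls1 \<union> vars_lits Ls2"
  by (auto simp: vars_lits_def)

lemma finite_vars_lits[simp]: "finite (vars_lits Ls)"
  by (simp add: vars_lits_def)

lemma subst_lits_eq_iff: "subst_lits Ls s1 = subst_lits Ls s2 \<longleftrightarrow> (\<forall>x\<in>vars_lits Ls. s1 x = s2 x)"
  by (induction Ls) (auto simp: subst_lit_eq_iff)

lemma subst_lits_comp: "subst_lits (subst_lits Ls s) th = subst_lits Ls (comp_subst s th)"
  by (induction Ls) (auto simp: subst_lit_comp)

lemma vars_subst_lits: "vars_lits (subst_lits Ls s) = (\<Union>x\<in>vars_lits Ls. vars_trm (s x))"
  by (induction Ls) (auto simp: vars_subst_lit)

lemma ground_subst_lits: "vars_lits Ls = {} \<Longrightarrow> subst_lits Ls s = Ls"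
  using subst_lits_eq_iff[of Ls s Var] by simp

lemma set_subst_lits[simp]: "set (subst_lits Ls s) = (\<lambda>L. subst_lit L s) ` set Ls"
  by (simp add: subst_lits_def)

lemma vars_lits_set: "vars_lits Ls = (\<Union>L\<in>set Ls. vars_lit L)"
  by (simp add: vars_lits_def)

lemma subst_sgoal_simps[simp]: "subst_sgoal [] s = []" 
  "subst_sgoal (g # gs) s = subst_hgoal g s # subst_sgoal gs s"
  "subst_sgoal (gs1 @ gs2) s = subst_sgoal gs1 s @ subst_sgoal gs2 s"
  by (auto simp: subst_sgoal_def)

lemma vars_sgoal_simps[simp]: "vars_sgoal [] = {}" "vars_sgoal (g # gs) = vars_hgoal g \<union> vars_sgoal gs"
  "vars_sgoal (gs1 @ gs2) = vars_sgoal gs1 \<union> vars_sgoal gs2"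
  by (auto simp: vars_sgoal_def)

lemma finite_vars_sgoal[simp]: "finite (vars_sgoal gs)"
  by (auto simp: vars_sgoal_def vars_hgoal_def)

lemma subst_hgoal_simp[simp]: "subst_hgoal (G, H) s = (subst_lits G s, subst_lits H s)"
  by (simp add: subst_hgoal_def)

lemma vars_hgoal_simp[simp]: "vars_hgoal (G, H) = vars_lits G \<union> vars_lits H"
  by (simp add: vars_hgoal_def)

lemma ground_subst_sgoal: "vars_sgoal gs = {} \<Longrightarrow> subst_sgoal gs s = gs"
  by (induction gs) (auto simp: subst_hgoal_def vars_hgoal_def ground_subst_lits)

lemma comp_subst_ground: "vars_trm (s x) = {} \<Longrightarrow> comp_subst s th x = s x"
  by (simp add: comp_subst_def ground_subst_trm)




definition dclosed :: "('p,'f,'v) rule set \<Rightarrow> ('p,'f,'v) atom set \<Rightarrow> bool" where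
  "dclosed P D \<longleftrightarrow> (\<forall>a\<in>D. \<forall>b. dep_edge P a b \<longrightarrow> b \<in> D)"

definition loc_stable :: "('p,'f,'v) rule set \<Rightarrow> ('p,'f,'v) atom set \<Rightarrow> ('p,'f,'v) atom set \<Rightarrow> bool" where
  "loc_stable P D M \<longleftrightarrow> (\<forall>a\<in>D. (a \<in> M) \<longleftrightarrow> a \<in> least_model (reduct P (M \<inter> D)))"

lemma lm_transfer:
  assumes dc: "dclosed P D"
    and neg: "\<And>A Bs c. (A,Bs) \<in> ground_prog P \<Longrightarrow> A \<in> D \<Longrightarrow> Neg c \<in> set Bs \<Longrightarrow> (c \<in> M1 \<longleftrightarrow> c \<in> M2)"
    and a: "a \<in> least_model (reduct P M1)" and aD: "a \<in> D"
  shows "a \<in> least_model (reduct P M2)"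
  using a aD
proof (induction rule: least_model.induct)
  case (lm_rule A Bs)
  then obtain Bs0 where r: "(A, Bs0) \<in> ground_prog P" "\<forall>B. Neg B \<in> set Bs0 \<longrightarrow> B \<notin> M1"
    and Bs: "Bs = [atom_of L. L \<leftarrow> Bs0, \<exists>B. L = Pos B]"
    unfolding reduct_def by blast
  have "\<forall>B. Neg B \<in> set Bs0 \<longrightarrow> B \<notin> M2" using r neg lm_rule.prems by blast
  then have "(A, Bs) \<in> reduct P M2" using r(1) Bs unfolding reduct_def by blast
  moreover have "\<forall>B\<in>set Bs. B \<in> least_model (reduct P M2)"
  proof
    fix B assume "B \<in> set Bs"
    then have "B \<in> atom_of ` set Bs0" using Bs by auto
    then have "dep_edge P A B" using r(1) unfolding dep_edge_def by blast
    then have "B \<in> D" using dc lm_rule.prems unfolding dclosed_def by blast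
    then show "B \<in> least_model (reduct P M2)" using lm_rule.IH \<open>B \<in> set Bs\<close> by blast
  qed
  ultimately show ?case by (rule least_model.lm_rule)
qed

lemma lm_local:
  assumes dc: "dclosed P D" and aD: "a \<in> D" and MD: "M1 \<inter> D = M2 \<inter> D"
  shows "a \<in> least_model (reduct P M1) \<longleftrightarrow> a \<in> least_model (reduct P M2)"
proof -
  have neg: "c \<in> M1 \<longleftrightarrow> c \<in> M2" if "(A,Bs) \<in> ground_prog P" "A \<in> D" "Neg c \<in> set Bs" for A Bs c
  proof -
    have "dep_edge P A c" using that unfolding dep_edge_def by force
    then have "c \<in> D" using dc that unfolding dclosed_def by blast
    then show ?thesis using MD by blast
  qed
  show ?thesis
    using lm_transfer[OF dc, of M1 M2] lm_transfer[OF dc, of M2 M1] neg aD by metis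
qed

lemma lit_true_cong: "atom_of L \<in> S \<Longrightarrow> M1 \<inter> S = M2 \<inter> S \<Longrightarrow> lit_true M1 L = lit_true M2 L"
  by (cases L) auto

definition dcl :: "('p,'f,'v) rule set \<Rightarrow> ('p,'f,'v) atom set \<Rightarrow> ('p,'f,'v) atom set" where
  "dcl P S = {b. \<exists>a\<in>S. (dep_edge P)\<^sup>*\<^sup>* a b}"

lemma dcl_dclosed: "dclosed P (dcl P S)"
  unfolding dclosed_def dcl_def by (auto intro: rtranclp.rtrancl_into_rtrancl)

lemma dcl_sub: "S \<subseteq> dcl P S"
  unfolding dcl_def by blast

lemma ground_prog_vars: "(A, Bs) \<in> ground_prog P \<Longrightarrow> vars_rule (A, Bs) = {}"
  unfolding ground_prog_def by auto

lemma dep_edge_ground: "dep_edge P a b \<Longrightarrow> ground_atom b"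
proof -
  assume "dep_edge P a b"
  then obtain Bs L where r: "(a, Bs) \<in> ground_prog P" and L: "L \<in> set Bs" "b = atom_of L"
    unfolding dep_edge_def by blast
  have "vars_lits Bs = {}" using ground_prog_vars[OF r] by (simp add: vars_rule_def)
  then have "vars_lit L = {}" using L by (auto simp: vars_lits_def)
  then show ?thesis using L by (simp add: ground_atom_def vars_lit_def)
qed

lemma lm_ground: "a \<in> least_model (reduct P M) \<Longrightarrow> ground_atom a"
proof (induction rule: least_model.induct)
  case (lm_rule A Bs)
  then obtain Bs0 where "(A, Bs0) \<in> ground_prog P" unfolding reduct_def by blast
  from ground_prog_vars[OF this] show ?case by (simp add: vars_rule_def ground_atom_def)
qed

lemma dep_star_ground: "(dep_edge P)\<^sup>*\<^sup>* a b \<Longrightarrow> ground_atom a \<Longrightarrow> ground_atom b"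
  by (induction rule: rtranclp_induct) (auto dest: dep_edge_ground)

lemma dcl_ground: "\<forall>a\<in>S. ground_atom a \<Longrightarrow> \<forall>b\<in>dcl P S. ground_atom b"
  unfolding dcl_def using dep_star_ground by blast

lemma dcl_finite: "finitely_recursive P \<Longrightarrow> finite S \<Longrightarrow> \<forall>a\<in>S. ground_atom a \<Longrightarrow> finite (dcl P S)"
proof -
  assume fr: "finitely_recursive P" and S: "finite S" "\<forall>a\<in>S. ground_atom a"
  have "dcl P S = (\<Union>a\<in>S. {b. (dep_edge P)\<^sup>*\<^sup>* a b})" unfolding dcl_def by blast
  moreover have "finite {b. (dep_edge P)\<^sup>*\<^sup>* a b}" if "a \<in> S" for a
    using fr S(2) that unfolding finitely_recursive_def by blast
  ultimately show ?thesis using S(1) by simp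
qed

lemma dclosed_dcl_sub: "dclosed P D \<Longrightarrow> S \<subseteq> D \<Longrightarrow> dcl P S \<subseteq> D"
proof
  fix b assume dc: "dclosed P D" and SD: "S \<subseteq> D" and "b \<in> dcl P S"
  then obtain a where a: "a \<in> S" "(dep_edge P)\<^sup>*\<^sup>* a b" unfolding dcl_def by blast
  from a(2) show "b \<in> D"
    by (induction rule: rtranclp_induct) (use dc a(1) SD in \<open>auto simp: dclosed_def\<close>)
qed

abbreviation BX :: "(('p,'f,'v) atom \<Rightarrow> bool) topology" where
  "BX \<equiv> product_topology (\<lambda>_. discrete_topology (UNIV::bool set)) UNIV"

lemma BX_top: "topspace BX = UNIV"
  by (auto simp: PiE_UNIV_domain)

lemma BX_compact: "compact_space BX"
  by (simp add: compact_space_product_topology compact_space_discrete_topology)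

lemma fd_open:
  assumes D: "finite D" and fd: "\<And>f g. (\<forall>x\<in>D. f x = g x) \<Longrightarrow> f \<in> S \<Longrightarrow> g \<in> S"
  shows "openin BX S"
  unfolding openin_product_topology_alt
proof (intro ballI)
  fix f assume f: "f \<in> S"
  define U where "U = (\<lambda>i. if i \<in> D then {f i} else (UNIV::bool set))"
  have sub: "{i \<in> UNIV. U i \<noteq> topspace (discrete_topology UNIV)} \<subseteq> D"
  proof
    fix i assume "i \<in> {i \<in> UNIV. U i \<noteq> topspace (discrete_topology UNIV)}"
    then have "U i \<noteq> UNIV" by simp
    then show "i \<in> D" unfolding U_def by (cases "i \<in> D") simp_all
  qed
  have "finite {i \<in> UNIV. U i \<noteq> topspace (discrete_topology UNIV)}"
    by (rule finite_subset[OF sub D])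
  moreover have "PiE UNIV U \<subseteq> S"
  proof
    fix g assume "g \<in> PiE UNIV U"
    then have "\<forall>x\<in>D. f x = g x"
      by (metis (no_types, lifting) PiE_mem UNIV_I U_def singletonD)
    then show "g \<in> S" using fd f by blast
  qed
  moreover have "f \<in> PiE UNIV U" by (auto simp: U_def PiE_UNIV_domain)
  moreover have "\<forall>i\<in>UNIV. openin (discrete_topology UNIV) (U i)" by simp
  ultimately show "\<exists>U. finite {i \<in> UNIV. U i \<noteq> topspace (discrete_topology UNIV)} \<and>
                 (\<forall>i\<in>UNIV. openin (discrete_topology UNIV) (U i)) \<and> f \<in> Pi\<^sub>E UNIV U \<and> Pi\<^sub>E UNIV U \<subseteq> S"
    by blast
qed

lemma fd_closed:
  assumes D: "finite D" and fd: "\<And>f g. (\<forall>x\<in>D. f x = g x) \<Longrightarrow> f \<in> S \<Longrightarrow> g \<in> S"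
  shows "closedin BX S"
proof -
  have "openin BX (UNIV - S)"
  proof (rule fd_open[OF D])
    fix f g
    assume fg: "\<forall>x\<in>D. f x = g x" and f: "f \<in> UNIV - S"
    have "g \<notin> S"
    proof
      assume "g \<in> S"
      moreover have "\<forall>x\<in>D. g x = f x" using fg by simp
      ultimately have "f \<in> S" by (rule fd[rotated])
      then show False using f by simp
    qed
    then show "g \<in> UNIV - S" by simp
  qed
  then show ?thesis unfolding closedin_def BX_top by auto
qed




lemma loc_stable_mono:
  assumes "loc_stable P D' M" "D \<subseteq> D'" "dclosed P D"
  shows "loc_stable P D M"
  unfolding loc_stable_def
proof
  fix a assume aD: "a \<in> D"
  have "(M \<inter> D') \<inter> D = M \<inter> D \<inter> D" using assms(2) by blast
  then have "a \<in> least_model (reduct P (M \<inter> D')) \<longleftrightarrow> a \<in> least_model (reduct P (M \<inter> D))"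
    using lm_local[OF assms(3) aD] by blast
  then show "(a \<in> M) = (a \<in> least_model (reduct P (M \<inter> D)))"
    using assms(1) aD assms(2) unfolding loc_stable_def by blast
qed

lemma dclosed_Union: "\<forall>D\<in>\<D>. dclosed P D \<Longrightarrow> dclosed P (\<Union>\<D>)"
  unfolding dclosed_def by blast

lemma compactness:
  fixes P :: "('p,'f,'v) rule set" and Hg Gg :: "('p,'f,'v) lit list"
  assumes fr: "finitely_recursive P" and D0: "finite D0" "\<forall>a\<in>D0. ground_atom a"
    and HG: "\<forall>L \<in> set Hg \<union> set Gg. atom_of L \<in> D0"
    and ent: "\<forall>M. stable_model P M \<longrightarrow> (\<forall>L\<in>set Hg. lit_true M L) \<longrightarrow> (\<forall>L\<in>set Gg. lit_true M L)"
  shows "\<exists>D. finite D \<and> dclosed P D \<and> D0 \<subseteq> D \<and> (\<forall>a\<in>D. ground_atom a) \<and>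
     (\<forall>M. loc_stable P D M \<longrightarrow> (\<forall>L\<in>set Hg. lit_true M L) \<longrightarrow> (\<forall>L\<in>set Gg. lit_true M L))"
proof (rule ccontr)
  define \<D> where "\<D> = {D. finite D \<and> dclosed P D \<and> D0 \<subseteq> D \<and> (\<forall>a\<in>D. ground_atom a)}"
  assume "\<not> ?thesis"
  then have neg: "\<And>D. D \<in> \<D> \<Longrightarrow> \<exists>M. loc_stable P D M \<and> (\<forall>L\<in>set Hg. lit_true M L) \<and> \<not> (\<forall>L\<in>set Gg. lit_true M L)"
    unfolding \<D>_def by blast
  define C where "C = (\<lambda>D. {f. loc_stable P D {x. f x} \<and> (\<forall>L\<in>set Hg. lit_true {x. f x} L) \<and> \<not> (\<forall>L\<in>set Gg. lit_true {x. f x} L)})"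
  have dclD: "dcl P S \<in> \<D>" if S: "finite S" "\<forall>a\<in>S. ground_atom a" "D0 \<subseteq> S" for S
  proof -
    have "finite (dcl P S)" using dcl_finite[OF fr S(1,2)] .
    moreover have "dclosed P (dcl P S)" by (rule dcl_dclosed)
    moreover have "D0 \<subseteq> dcl P S" using S(3) dcl_sub[of S P] by (rule subset_trans)
    moreover have "\<forall>a\<in>dcl P S. ground_atom a" by (rule dcl_ground[OF S(2)])
    ultimately show ?thesis unfolding \<D>_def by simp
  qed
  have closed: "closedin BX (C D)" if "D \<in> \<D>" for D
  proof (rule fd_closed)
    show "finite D" using that unfolding \<D>_def by blast
  next
    fix f g :: "('p,'f,'v) atom \<Rightarrow> bool"
    assume fg: "\<forall>x\<in>D. f x = g x" and f: "f \<in> C D"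
    have MD: "{x. f x} \<inter> D = {x. g x} \<inter> D" using fg by auto
    have D0D: "D0 \<subseteq> D" using that unfolding \<D>_def by blast
    have lt: "lit_true {x. f x} L = lit_true {x. g x} L" if "L \<in> set Hg \<union> set Gg" for L
      using lit_true_cong[of L D, OF _ MD] HG that D0D by blast
    have lf: "loc_stable P D {x. f x}" using f unfolding C_def by simp
    have "loc_stable P D {x. g x}"
      unfolding loc_stable_def
    proof
      fix a assume a: "a \<in> D"
      have "f a \<longleftrightarrow> a \<in> least_model (reduct P ({x. f x} \<inter> D))"
        using lf a unfolding loc_stable_def by simp
      then show "(a \<in> {x. g x}) = (a \<in> least_model (reduct P ({x. g x} \<inter> D)))"
        using MD fg a by simp
    qed
    then show "g \<in> C D" using f lt unfolding C_def by auto
  qed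
  have fip: "\<Inter>\<F> \<noteq> {}" if F: "finite \<F>" "\<F> \<subseteq> C ` \<D>" for \<F>
  proof -
    obtain \<D>' where D': "\<D>' \<subseteq> \<D>" "finite \<D>'" "\<F> = C ` \<D>'"
      using finite_subset_image[OF F] by metis
    define Ds where "Ds = dcl P (D0 \<union> \<Union>\<D>')"
    have "Ds \<in> \<D>" unfolding Ds_def
      by (rule dclD) (use D' D0 in \<open>auto simp: \<D>_def\<close>)
    then obtain M where M: "loc_stable P Ds M" "\<forall>L\<in>set Hg. lit_true M L" "\<not> (\<forall>L\<in>set Gg. lit_true M L)"
      using neg by blast
    have "(\<lambda>x. x \<in> M) \<in> C D" if "D \<in> \<D>'" for D
    proof -
      have "D \<subseteq> Ds" using that dcl_sub[of "D0 \<union> \<Union>\<D>'" P] unfolding Ds_def by blast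
      moreover have "dclosed P D" using that D' unfolding \<D>_def by blast
      ultimately have "loc_stable P D M" using loc_stable_mono M(1) by blast
      then show ?thesis using M unfolding C_def by simp
    qed
    then show ?thesis using D' by blast
  qed
  have "\<Inter>(C ` \<D>) \<noteq> {}"
    by (rule BX_compact[unfolded compact_space_fip, rule_format]) (use closed fip in auto)
  then obtain f where f: "\<And>D. D \<in> \<D> \<Longrightarrow> f \<in> C D" by blast
  define M where "M = {x. ground_atom x \<and> f x}"
  have MD: "{x. f x} \<inter> D = M \<inter> D" if "D \<in> \<D>" for D
    using that unfolding M_def \<D>_def by auto
  have "stable_model P M"
    unfolding stable_model_def
  proof (rule set_eqI)
    fix x
    show "x \<in> M \<longleftrightarrow> x \<in> least_model (reduct P M)"
    proof (cases "ground_atom x")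
      case True
      define D where "D = dcl P (D0 \<union> {x})"
      have DD: "D \<in> \<D>" unfolding D_def by (rule dclD) (use True D0 in auto)
      have xD: "x \<in> D" using dcl_sub[of "D0 \<union> {x}" P] unfolding D_def by blast
      have dc: "dclosed P D" using DD unfolding \<D>_def by blast
      have "f x \<longleftrightarrow> x \<in> least_model (reduct P ({x. f x} \<inter> D))"
        using f[OF DD] xD unfolding C_def loc_stable_def by auto
      also have "\<dots> \<longleftrightarrow> x \<in> least_model (reduct P (M \<inter> D))" using MD[OF DD] by simp
      also have "\<dots> \<longleftrightarrow> x \<in> least_model (reduct P M)"
        using lm_local[OF dc xD, of "M \<inter> D" M] by blast
      finally show ?thesis using True unfolding M_def by simp
    next
      case False
      then show ?thesis using lm_ground unfolding M_def by blast
    qed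
  qed
  moreover
  define D where "D = dcl P D0"
  have DD: "D \<in> \<D>" unfolding D_def by (rule dclD) (use D0 in auto)
  have D0D: "D0 \<subseteq> D" unfolding D_def by (rule dcl_sub)
  have lt: "lit_true {x. f x} L = lit_true M L" if "L \<in> set Hg \<union> set Gg" for L
    using lit_true_cong[of L D, OF _ MD[OF DD]] HG that D0D by blast
  have "(\<forall>L\<in>set Hg. lit_true M L) \<and> \<not> (\<forall>L\<in>set Gg. lit_true M L)"
    using f[OF DD] lt unfolding C_def by auto
  ultimately show False using ent by blast
qed




lemma step_success: "sk_step P CS G0 (([],H)#\<Delta>, \<sigma>, U) (\<Delta>, \<sigma>, U)"
  using sk_step.success[of P CS G0 "[]" H \<Delta> \<sigma> U] by simp

lemma step_contra: "L \<in> set H \<Longrightarrow> sk_step P CS G0 ((G,H)#\<Delta>, \<sigma>, U)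
   (([neg_lit L],H)#\<Delta>, \<sigma>, U \<union> vars_sgoal (([neg_lit L],H)#\<Delta>))"
  using sk_step.contradiction[of L H "([neg_lit L],H)#\<Delta>" "[]" \<Delta> P CS G0 G \<sigma> U] by simp

lemma step_split: "sk_step P CS G0 ((G,H)#\<Delta>, \<sigma>, U)
   ((G,H@[L]) # (subst_lits G0 \<sigma>, H@[neg_lit L]) # \<Delta>, \<sigma>,
     U \<union> vars_sgoal ((G,H@[L]) # (subst_lits G0 \<sigma>, H@[neg_lit L]) # \<Delta>))"
  using sk_step.split[of "(G,H@[L]) # (subst_lits G0 \<sigma>, H@[neg_lit L]) # \<Delta>" "[]" G H L G0 \<sigma> \<Delta> P CS U]
  by simp

lemma step_hyp: "L' \<in> set H \<Longrightarrow> is_mgu_lit \<theta> L L' \<Longrightarrow> sk_step P CS G0 ((L#Ls,H)#\<Delta>, \<sigma>, U)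
   (subst_sgoal ((Ls,H)#\<Delta>) \<theta>, comp_subst \<sigma> \<theta>, U \<union> vars_sgoal (subst_sgoal ((Ls,H)#\<Delta>) \<theta>))"
  using sk_step.res_hyp[of L' H \<theta> L "subst_sgoal ((Ls,H)#\<Delta>) \<theta>" "[]" "[]" Ls \<Delta> P CS G0 \<sigma> U] by simp

lemma step_prog: "r \<in> P \<Longrightarrow> variant r (A, Bs) \<Longrightarrow>
   vars_rule (A, Bs) \<inter> (U \<union> vars_sgoal ((Pos A0 # Ls, H) # \<Delta>)) = {} \<Longrightarrow>
   is_mgu_lit \<theta> (Pos A0) (Pos A) \<Longrightarrow>
   sk_step P CS G0 ((Pos A0 # Ls,H)#\<Delta>, \<sigma>, U)
   (subst_sgoal ((Bs @ Ls,H)#\<Delta>) \<theta>, comp_subst \<sigma> \<theta>,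
     U \<union> vars_rule (A, Bs) \<union> vars_sgoal (subst_sgoal ((Bs @ Ls,H)#\<Delta>) \<theta>))"
  using sk_step.res_prog[of r P A Bs U "[]" "[]" A0 Ls H \<Delta> \<theta> "subst_sgoal ((Bs @ Ls,H)#\<Delta>) \<theta>" CS G0 \<sigma>]
  by simp

lemma step_fail: "(K, \<theta>) \<in> CS A \<Longrightarrow> sk_step P CS G0 ((Neg A # Ls,H)#\<Delta>, \<sigma>, U)
   (subst_sgoal ((map Pos K @ Ls,H)#\<Delta>) \<theta>, comp_subst \<sigma> \<theta>,
     U \<union> vars_sgoal (subst_sgoal ((map Pos K @ Ls,H)#\<Delta>) \<theta>))"
  using sk_step.failure[of K \<theta> CS A "subst_sgoal ((map Pos K @ Ls,H)#\<Delta>) \<theta>" "[]" "[]" Ls H \<Delta> P G0 \<sigma> U]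
  by simp

lemma finite_vars_rule[simp]: "finite (vars_rule r)"
  by (simp add: vars_rule_def)

lemma step_pres:
  assumes "sk_step P CS G0 (S,\<sigma>,U) (S',\<sigma>',U')" "finite U"
  shows "finite U' \<and> (\<forall>x. vars_trm (\<sigma> x) = {} \<longrightarrow> \<sigma>' x = \<sigma> x)"
  using assms by (cases rule: sk_step.cases) (auto simp: comp_subst_ground)

lemma steps_pres0:
  assumes "(sk_step P CS G0)\<^sup>*\<^sup>* s s'" "finite (snd (snd s))"
  shows "finite (snd (snd s')) \<and> (\<forall>x. vars_trm (fst (snd s) x) = {} \<longrightarrow> fst (snd s') x = fst (snd s) x)"
  using assms
proof (induction rule: rtranclp_induct)
  case base then show ?case by simp
next
  case (step y z)
  obtain S1 \<sigma>1 U1 where y: "y = (S1,\<sigma>1,U1)" by (cases y) auto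
  obtain S2 \<sigma>2 U2 where z: "z = (S2,\<sigma>2,U2)" by (cases z) auto
  have "finite U1 \<and> (\<forall>x. vars_trm (fst (snd s) x) = {} \<longrightarrow> \<sigma>1 x = fst (snd s) x)"
    using step.IH step.prems y by simp
  moreover have "finite U1 \<Longrightarrow> finite U2 \<and> (\<forall>x. vars_trm (\<sigma>1 x) = {} \<longrightarrow> \<sigma>2 x = \<sigma>1 x)"
    using step_pres[of P CS G0 S1 \<sigma>1 U1 S2 \<sigma>2 U2] step.hyps(2) y z by simp
  ultimately show ?case using z by auto
qed

lemma steps_pres:
  assumes "(sk_step P CS G0)\<^sup>*\<^sup>* (S,\<sigma>,U) (S',\<sigma>',U')" "finite U"
  shows "finite U' \<and> (\<forall>x. vars_trm (\<sigma> x) = {} \<longrightarrow> \<sigma>' x = \<sigma> x)"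
  using steps_pres0[OF assms(1)] assms(2) by simp

definition matcher :: "('p,'f,'v) lit \<Rightarrow> ('f,'v) subst \<Rightarrow> ('f,'v) subst" where
  "matcher L \<rho> = (\<lambda>x. if x \<in> vars_lit L then \<rho> x else Var x)"

lemma matcher_ground: "vars_lit (subst_lit L \<rho>) = {} \<Longrightarrow> x \<in> vars_lit L \<Longrightarrow> vars_trm (\<rho> x) = {}"
  by (auto simp: vars_subst_lit)

lemma matcher_mgu:
  assumes g: "vars_lit (subst_lit L \<rho>) = {}"
  shows "is_mgu_lit (matcher L \<rho>) L (subst_lit L \<rho>)"
  unfolding is_mgu_lit_def
proof (intro conjI allI impI)
  have "subst_lit L (matcher L \<rho>) = subst_lit L \<rho>"
    by (simp add: subst_lit_eq_iff matcher_def)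
  then show "subst_lit L (matcher L \<rho>) = subst_lit (subst_lit L \<rho>) (matcher L \<rho>)"
    using ground_subst_lit[OF g] by simp
next
  fix \<tau> assume "subst_lit L \<tau> = subst_lit (subst_lit L \<rho>) \<tau>"
  then have "subst_lit L \<tau> = subst_lit L \<rho>" using ground_subst_lit[OF g] by simp
  then have eq: "\<forall>x\<in>vars_lit L. \<tau> x = \<rho> x" by (simp add: subst_lit_eq_iff)
  show "\<exists>\<delta>. \<forall>x. \<tau> x = subst_trm (matcher L \<rho> x) \<delta>"
    by (rule exI[of _ \<tau>]) (auto simp: matcher_def eq ground_subst_trm matcher_ground[OF g])
qed

lemma matcher_comp:
  assumes g: "vars_lit (subst_lit L \<rho>) = {}"
  shows "comp_subst (matcher L \<rho>) \<rho> = \<rho>"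
  by (rule ext) (auto simp: comp_subst_def matcher_def ground_subst_trm matcher_ground[OF g])

lemma is_mgu_sym: "is_mgu_lit \<theta> L L' \<Longrightarrow> is_mgu_lit \<theta> L' L"
  unfolding is_mgu_lit_def by metis

lemma vars_lits_empty: "vars_lits H = {} \<Longrightarrow> L \<in> set H \<Longrightarrow> vars_lit L = {}"
  by (auto simp: vars_lits_def)

lemma close_by_hyps:
  assumes H: "vars_lits H = {}" and D: "vars_sgoal \<Delta> = {}"
  shows "\<forall>L\<in>set Ls. subst_lit L \<rho> \<in> set H \<Longrightarrow>
     \<exists>\<sigma>' U'. (sk_step P CS G0)\<^sup>*\<^sup>* ((Ls,H)#\<Delta>, \<sigma>, U) (\<Delta>, \<sigma>', U')"
proof (induction Ls arbitrary: \<sigma> U rule: length_induct)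
  case (1 Ls)
  show ?case
  proof (cases Ls)
    case Nil
    then show ?thesis using step_success[of P CS G0 H \<Delta> \<sigma> U] by blast
  next
    case (Cons L Ls')
    have LH: "subst_lit L \<rho> \<in> set H" using 1(2) Cons by simp
    have g: "vars_lit (subst_lit L \<rho>) = {}" using vars_lits_empty[OF H LH] .
    define \<theta> where "\<theta> = matcher L \<rho>"
    have st: "sk_step P CS G0 ((Ls,H)#\<Delta>, \<sigma>, U)
      ((subst_lits Ls' \<theta>, H) # \<Delta>, comp_subst \<sigma> \<theta>, U \<union> vars_sgoal (subst_sgoal ((Ls',H)#\<Delta>) \<theta>))"
      using step_hyp[OF LH matcher_mgu[OF g], of P CS G0 Ls' \<Delta> \<sigma> U] Cons
      by (simp add: \<theta>_def ground_subst_lits[OF H] ground_subst_sgoal[OF D])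
    have "\<forall>L'\<in>set (subst_lits Ls' \<theta>). subst_lit L' \<rho> \<in> set H"
      using 1(2) Cons by (auto simp: subst_lit_comp \<theta>_def matcher_comp[OF g])
    moreover have "length (subst_lits Ls' \<theta>) < length Ls" using Cons by (simp add: subst_lits_def)
    ultimately obtain \<sigma>' U' where "(sk_step P CS G0)\<^sup>*\<^sup>* ((subst_lits Ls' \<theta>, H) # \<Delta>, comp_subst \<sigma> \<theta>,
         U \<union> vars_sgoal (subst_sgoal ((Ls',H)#\<Delta>) \<theta>)) (\<Delta>, \<sigma>', U')"
      using 1(1) by blast
    then show ?thesis using st by (meson converse_rtranclp_into_rtranclp)
  qed
qed

definition closes :: "('p,'f,'v) rule set \<Rightarrow> (('p,'f,'v) atom \<Rightarrow> (('p,'f,'v) atom list \<times> ('f,'v) subst) set)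
   \<Rightarrow> ('p,'f,'v) lit list \<Rightarrow> 'v set \<Rightarrow> ('f,'v) subst \<Rightarrow> ('p,'f,'v) hgoal \<Rightarrow> bool" where
  "closes P CS G0 V \<gamma> hg \<longleftrightarrow> (\<forall>\<Delta> \<sigma> U. vars_sgoal \<Delta> = {} \<longrightarrow> finite U \<longrightarrow> (\<forall>x\<in>V. \<sigma> x = \<gamma> x) \<longrightarrow>
      (\<exists>\<sigma>' U'. (sk_step P CS G0)\<^sup>*\<^sup>* (hg#\<Delta>,\<sigma>,U) (\<Delta>,\<sigma>',U')))"

lemma closes_hyps:
  assumes "vars_lits H = {}" "\<forall>L\<in>set Ls. L \<in> set H"
  shows "closes P CS G0 V \<gamma> (Ls, H)"
  unfolding closes_def using close_by_hyps[OF assms(1), of _ Ls Var] assms(2) by simp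

lemma neg_neg[simp]: "neg_lit (neg_lit L) = L"
  by (cases L) auto

lemma vars_neg_lit[simp]: "vars_lit (neg_lit L) = vars_lit L"
  by (cases L) (auto simp: vars_lit_def)

lemma closes_incons:
  fixes H :: "('p,'f,'v) lit list"
  assumes H: "vars_lits H = {}" and L: "L \<in> set H" "neg_lit L \<in> set H"
  shows "closes P CS G0 V \<gamma> (G', H)"
  unfolding closes_def
proof (intro allI impI)
  fix \<Delta> \<sigma> U assume D: "vars_sgoal (\<Delta>::('p,'f,'v) sgoal) = {}"
  have s1: "sk_step P CS G0 ((G',H)#\<Delta>, \<sigma>, U) (([neg_lit L],H)#\<Delta>, \<sigma>, U \<union> vars_sgoal (([neg_lit L],H)#\<Delta>))"
    by (rule step_contra[OF L(1)])
  have "\<exists>\<sigma>' U'. (sk_step P CS G0)\<^sup>*\<^sup>* (([neg_lit L],H)#\<Delta>, \<sigma>, U \<union> vars_sgoal (([neg_lit L],H)#\<Delta>)) (\<Delta>, \<sigma>', U')"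
    by (rule close_by_hyps[OF H D, where \<rho>=Var]) (use L in simp)
  then obtain \<sigma>' U' where "(sk_step P CS G0)\<^sup>*\<^sup>* (([neg_lit L],H)#\<Delta>, \<sigma>, U \<union> vars_sgoal (([neg_lit L],H)#\<Delta>)) (\<Delta>, \<sigma>', U')"
    by blast
  then show "\<exists>\<sigma>' U'. (sk_step P CS G0)\<^sup>*\<^sup>* ((G', H) # \<Delta>, \<sigma>, U) (\<Delta>, \<sigma>', U')"
    using s1 by (meson converse_rtranclp_into_rtranclp)
qed

lemma closes_fail:
  fixes H :: "('p,'f,'v) lit list"
  assumes H: "vars_lits H = {}" and a: "Pos a \<in> set H" and c: "(K, \<theta>) \<in> CS a"
    and K: "\<forall>B\<in>set K. vars_atom B = {} \<and> Pos B \<in> set H"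
  shows "closes P CS G0 V \<gamma> (G', H)"
  unfolding closes_def
proof (intro allI impI)
  fix \<Delta> \<sigma> U assume D: "vars_sgoal (\<Delta>::('p,'f,'v) sgoal) = {}"
  have s1: "sk_step P CS G0 ((G',H)#\<Delta>, \<sigma>, U) (([Neg a],H)#\<Delta>, \<sigma>, U \<union> vars_sgoal (([Neg a],H)#\<Delta>))"
    using step_contra[OF a] by simp
  have Kg: "vars_lits (map Pos K) = {}" using K by (auto simp: vars_lits_def vars_lit_def)
  have s2: "sk_step P CS G0 (([Neg a],H)#\<Delta>, \<sigma>, U \<union> vars_sgoal (([Neg a],H)#\<Delta>))
     ((map Pos K, H)#\<Delta>, comp_subst \<sigma> \<theta>, U \<union> vars_sgoal (([Neg a],H)#\<Delta>) \<union> vars_sgoal (subst_sgoal ((map Pos K @ [],H)#\<Delta>) \<theta>))"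
    using step_fail[where K=K and \<theta>=\<theta> and CS=CS and A=a, OF c, of P G0 "[]" H \<Delta> \<sigma>] 
    by (simp add: ground_subst_lits[OF H] ground_subst_sgoal[OF D] ground_subst_lits[OF Kg])
  have "\<exists>\<sigma>' U'. (sk_step P CS G0)\<^sup>*\<^sup>* ((map Pos K, H)#\<Delta>, comp_subst \<sigma> \<theta>, U \<union> vars_sgoal (([Neg a],H)#\<Delta>) \<union> vars_sgoal (subst_sgoal ((map Pos K @ [],H)#\<Delta>) \<theta>)) (\<Delta>, \<sigma>', U')"
    by (rule close_by_hyps[OF H D, where \<rho>=Var]) (use K in auto)
  then obtain \<sigma>' U' where "(sk_step P CS G0)\<^sup>*\<^sup>* ((map Pos K, H)#\<Delta>, comp_subst \<sigma> \<theta>, U \<union> vars_sgoal (([Neg a],H)#\<Delta>) \<union> vars_sgoal (subst_sgoal ((map Pos K @ [],H)#\<Delta>) \<theta>)) (\<Delta>, \<sigma>', U')"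
    by blast
  then show "\<exists>\<sigma>' U'. (sk_step P CS G0)\<^sup>*\<^sup>* ((G', H) # \<Delta>, \<sigma>, U) (\<Delta>, \<sigma>', U')"
    using s1 s2 by (meson converse_rtranclp_into_rtranclp)
qed




lemma fresh_perm:
  assumes inf: "infinite (UNIV :: 'v set)" and A: "finite (A::'v set)" and B: "finite (B::'v set)"
  shows "\<exists>\<pi>. bij \<pi> \<and> \<pi> ` A \<inter> B = {}"
proof -
  have "infinite (UNIV - (A \<union> B))" using inf A B by simp
  then obtain C where C: "C \<subseteq> UNIV - (A \<union> B)" "finite C" "card C = card A"
    using infinite_arbitrarily_large by blast
  obtain f where f: "bij_betw f A C" using finite_same_card_bij[OF A C(2) C(3)[symmetric]] by blast
  define \<pi> where "\<pi> = (\<lambda>x. if x \<in> A then f x else if x \<in> C then inv_into A f x else x)"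
  have fA: "f ` A = C" and inj: "inj_on f A" using f by (auto simp: bij_betw_def)
  have AC: "A \<inter> C = {}" using C(1) by blast
  have inv: "\<pi> (\<pi> x) = x" for x
  proof (cases "x \<in> A")
    case True
    then have "f x \<in> C" using fA by blast
    then have "f x \<notin> A" using AC by blast
    then show ?thesis using True \<open>f x \<in> C\<close> inj by (simp add: \<pi>_def inv_into_f_f)
  next
    case False
    show ?thesis
    proof (cases "x \<in> C")
      case True
      have "inv_into A f x \<in> A" using True fA by (metis inv_into_into)
      moreover have "f (inv_into A f x) = x" using True fA by (metis f_inv_into_f)
      ultimately show ?thesis using True False by (simp add: \<pi>_def)
    next
      case False2: False
      then show ?thesis using False by (simp add: \<pi>_def)
    qed
  qed
  have "bij \<pi>" by (rule o_bij[of \<pi> \<pi>]) (auto simp: inv)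
  moreover have "\<pi> ` A \<inter> B = {}" using fA C(1) by (auto simp: \<pi>_def)
  ultimately show ?thesis by blast
qed

lemma vars_rename_atom: "vars_atom (subst_atom A (\<lambda>x. Var (\<pi> x))) = \<pi> ` vars_atom A"
  by (auto simp: vars_subst_atom)

lemma vars_rename_lits: "vars_lits (subst_lits Ls (\<lambda>x. Var (\<pi> x))) = \<pi> ` vars_lits Ls"
  by (auto simp: vars_subst_lits)

lemma closes_prog:
  fixes H :: "('p,'f,'v) lit list"
  assumes inf: "infinite (UNIV :: 'v set)"
    and H: "vars_lits H = {}" and b: "Neg b \<in> set H" and r: "(b, Bs0) \<in> ground_prog P"
    and Bs0: "set Bs0 \<subseteq> set H"
  shows "closes P CS G0 V \<gamma> (G', H)"
  unfolding closes_def
proof (intro allI impI)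
  fix \<Delta> \<sigma> U assume D: "vars_sgoal (\<Delta>::('p,'f,'v) sgoal) = {}" and U: "finite (U::'v set)"
  obtain hA hB \<tau> where rP: "(hA, hB) \<in> P" and eq: "(b, Bs0) = subst_rule (hA, hB) \<tau>"
    and gr: "vars_rule (subst_rule (hA, hB) \<tau>) = {}"
    using r unfolding ground_prog_def by auto
  have bdef: "b = subst_atom hA \<tau>" and Bs0def: "Bs0 = subst_lits hB \<tau>"
    using eq by (auto simp: subst_rule_def)
  define U1 where "U1 = U \<union> vars_sgoal (([Pos b],H)#\<Delta>)"
  have U1: "finite U1" using U by (simp add: U1_def)
  obtain \<pi> where \<pi>: "bij \<pi>" "\<pi> ` vars_rule (hA, hB) \<inter> U1 = {}"
    using fresh_perm[OF inf finite_vars_rule U1] by blast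
  define A where "A = subst_atom hA (\<lambda>x. Var (\<pi> x))"
  define Bs where "Bs = subst_lits hB (\<lambda>x. Var (\<pi> x))"
  have var: "variant (hA, hB) (A, Bs)"
    unfolding variant_def using \<pi>(1) by (auto simp: A_def Bs_def subst_rule_def)
  have vr: "vars_rule (A, Bs) = \<pi> ` vars_rule (hA, hB)"
    by (auto simp: vars_rule_def A_def Bs_def vars_rename_atom vars_rename_lits)
  define \<rho> where "\<rho> = (\<lambda>x. \<tau> (inv \<pi> x))"
  have crho: "comp_subst (\<lambda>x. Var (\<pi> x)) \<rho> = \<tau>"
    by (rule ext) (simp add: comp_subst_def \<rho>_def inv_f_f bij_is_inj[OF \<pi>(1)])
  have Arho: "subst_lit (Pos A) \<rho> = Pos b"
    by (simp add: A_def subst_atom_comp crho bdef)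
  have Bsrho: "subst_lits Bs \<rho> = Bs0"
    by (simp add: Bs_def subst_lits_comp crho Bs0def)
  have gb: "vars_lit (subst_lit (Pos A) \<rho>) = {}" using Arho vars_lits_empty[OF H b]
    by (simp add: vars_lit_def)
  define \<theta> where "\<theta> = matcher (Pos A) \<rho>"
  have mgu: "is_mgu_lit \<theta> (Pos b) (Pos A)"
    using is_mgu_sym[OF matcher_mgu[OF gb]] Arho by (simp add: \<theta>_def)
  have s1: "sk_step P CS G0 ((G',H)#\<Delta>, \<sigma>, U) (([Pos b],H)#\<Delta>, \<sigma>, U1)"
    using step_contra[OF b] by (simp add: U1_def)
  have disj: "vars_rule (A, Bs) \<inter> (U1 \<union> vars_sgoal (([Pos b], H) # \<Delta>)) = {}"
  proof -
    have "vars_sgoal (([Pos b], H) # \<Delta>) = {}"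
      using D H vars_lits_empty[OF H b] by (simp add: vars_lit_def)
    then show ?thesis using vr \<pi>(2) by auto
  qed
  define U2 where "U2 = U1 \<union> vars_rule (A, Bs) \<union> vars_sgoal (subst_sgoal ((Bs @ [],H)#\<Delta>) \<theta>)"
  have s2: "sk_step P CS G0 (([Pos b],H)#\<Delta>, \<sigma>, U1) ((subst_lits Bs \<theta>, H) # \<Delta>, comp_subst \<sigma> \<theta>, U2)"
    using step_prog[OF rP var _ mgu, of U1 "[]" H \<Delta> CS G0 \<sigma>] disj
    by (simp add: U2_def ground_subst_lits[OF H] ground_subst_sgoal[OF D])
  have "\<forall>L\<in>set (subst_lits Bs \<theta>). subst_lit L \<rho> \<in> set H"
  proof
    fix L assume "L \<in> set (subst_lits Bs \<theta>)"
    then obtain L0 where L0: "L0 \<in> set Bs" "L = subst_lit L0 \<theta>" by auto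
    have "subst_lit L \<rho> = subst_lit L0 \<rho>"
      using L0(2) by (simp add: subst_lit_comp \<theta>_def matcher_comp[OF gb])
    moreover have "subst_lit L0 \<rho> \<in> set Bs0" using L0(1) Bsrho[symmetric] by auto
    ultimately show "subst_lit L \<rho> \<in> set H" using Bs0 by auto
  qed
  then have "\<exists>\<sigma>' U'. (sk_step P CS G0)\<^sup>*\<^sup>* ((subst_lits Bs \<theta>, H) # \<Delta>, comp_subst \<sigma> \<theta>, U2) (\<Delta>, \<sigma>', U')"
    by (rule close_by_hyps[OF H D])
  then show "\<exists>\<sigma>' U'. (sk_step P CS G0)\<^sup>*\<^sup>* ((G', H) # \<Delta>, \<sigma>, U) (\<Delta>, \<sigma>', U')"
    using s1 s2 by (meson converse_rtranclp_into_rtranclp)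
qed

lemma closes_split:
  fixes Gg :: "('p,'f,'v) lit list"
  assumes Gg: "Gg = subst_lits G0 \<gamma>" "vars_lits Gg = {}" "vars_lits G0 \<subseteq> V"
    and gam: "\<forall>x\<in>V. vars_trm (\<gamma> x) = {}"
  shows "vars_lits H1 = {} \<Longrightarrow> \<forall>d\<in>set ds. vars_atom d = {} \<Longrightarrow>
     (\<And>H2. set H1 \<subseteq> set H2 \<Longrightarrow> vars_lits H2 = {} \<Longrightarrow> (\<forall>d\<in>set ds. Pos d \<in> set H2 \<or> Neg d \<in> set H2)
        \<Longrightarrow> closes P CS G0 V \<gamma> (Gg, H2)) \<Longrightarrow> closes P CS G0 V \<gamma> (Gg, H1)"
proof (induction ds arbitrary: H1)
  case Nil
  then show ?case by simp
next
  case (Cons d ds)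
  have dg: "vars_atom d = {}" using Cons.prems(2) by simp
  have c1: "closes P CS G0 V \<gamma> (Gg, H1 @ [Pos d])"
  proof (rule Cons.IH)
    show "vars_lits (H1 @ [Pos d]) = {}" using Cons.prems(1) dg by (simp add: vars_lit_def)
    show "\<forall>d\<in>set ds. vars_atom d = {}" using Cons.prems(2) by simp
    fix H2 assume "set (H1 @ [Pos d]) \<subseteq> set H2" "vars_lits H2 = {}" "\<forall>d\<in>set ds. Pos d \<in> set H2 \<or> Neg d \<in> set H2"
    then show "closes P CS G0 V \<gamma> (Gg, H2)" using Cons.prems(3) by auto
  qed
  have c2: "closes P CS G0 V \<gamma> (Gg, H1 @ [Neg d])"
  proof (rule Cons.IH)
    show "vars_lits (H1 @ [Neg d]) = {}" using Cons.prems(1) dg by (simp add: vars_lit_def)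
    show "\<forall>d\<in>set ds. vars_atom d = {}" using Cons.prems(2) by simp
    fix H2 assume "set (H1 @ [Neg d]) \<subseteq> set H2" "vars_lits H2 = {}" "\<forall>d\<in>set ds. Pos d \<in> set H2 \<or> Neg d \<in> set H2"
    then show "closes P CS G0 V \<gamma> (Gg, H2)" using Cons.prems(3) by auto
  qed
  show ?case
    unfolding closes_def
  proof (intro allI impI)
    fix \<Delta> \<sigma> U assume D: "vars_sgoal (\<Delta>::('p,'f,'v) sgoal) = {}" and U: "finite (U::'v set)"
      and inv: "\<forall>x\<in>V. \<sigma> x = \<gamma> x"
    have G0s: "subst_lits G0 \<sigma> = Gg" using Gg(1,3) inv by (auto simp: subst_lits_eq_iff)
    define U1 where "U1 = U \<union> vars_sgoal ((Gg,H1@[Pos d]) # (Gg, H1@[Neg d]) # \<Delta>)"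
    have s1: "sk_step P CS G0 ((Gg,H1)#\<Delta>, \<sigma>, U) ((Gg,H1@[Pos d]) # (Gg, H1@[Neg d]) # \<Delta>, \<sigma>, U1)"
      using step_split[of P CS G0 Gg H1 \<Delta> \<sigma> U "Pos d"] G0s by (simp add: U1_def)
    have D2: "vars_sgoal ((Gg, H1@[Neg d]) # \<Delta>) = {}" using D Gg(2) Cons.prems(1) dg
      by (simp add: vars_lit_def)
    have U1f: "finite U1" using U by (simp add: U1_def)
    obtain \<sigma>1 U2 where r1: "(sk_step P CS G0)\<^sup>*\<^sup>* ((Gg,H1@[Pos d]) # (Gg, H1@[Neg d]) # \<Delta>, \<sigma>, U1)
        ((Gg, H1@[Neg d]) # \<Delta>, \<sigma>1, U2)"
      using c1 D2 U1f inv unfolding closes_def by blast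
    have p: "finite U2 \<and> (\<forall>x. vars_trm (\<sigma> x) = {} \<longrightarrow> \<sigma>1 x = \<sigma> x)"
      by (rule steps_pres[OF r1 U1f])
    have inv1: "\<forall>x\<in>V. \<sigma>1 x = \<gamma> x" using p inv gam by auto
    obtain \<sigma>2 U3 where r2: "(sk_step P CS G0)\<^sup>*\<^sup>* ((Gg, H1@[Neg d]) # \<Delta>, \<sigma>1, U2) (\<Delta>, \<sigma>2, U3)"
      using c2 D p inv1 unfolding closes_def by blast
    show "\<exists>\<sigma>' U'. (sk_step P CS G0)\<^sup>*\<^sup>* ((Gg, H1) # \<Delta>, \<sigma>, U) (\<Delta>, \<sigma>', U')"
      using s1 r1 r2 by (meson converse_rtranclp_into_rtranclp rtranclp_trans)
  qed
qed




lemma lm_witness: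
  assumes dc: "dclosed P D"
    and nw: "\<not> (\<exists>b Bs0. (b,Bs0) \<in> ground_prog P \<and> b \<in> D \<and> b \<notin> I \<and> (\<forall>c. Pos c \<in> set Bs0 \<longrightarrow> c \<in> I)
              \<and> (\<forall>c. Neg c \<in> set Bs0 \<longrightarrow> c \<notin> I))"
  shows "a \<in> least_model (reduct P I) \<Longrightarrow> a \<in> D \<Longrightarrow> a \<in> I"
proof (induction rule: least_model.induct)
  case (lm_rule A Bs)
  then obtain Bs0 where r: "(A, Bs0) \<in> ground_prog P" "\<forall>B. Neg B \<in> set Bs0 \<longrightarrow> B \<notin> I"
    and Bs: "Bs = [atom_of L. L \<leftarrow> Bs0, \<exists>B. L = Pos B]"
    unfolding reduct_def by blast
  have "c \<in> I" if "Pos c \<in> set Bs0" for c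
  proof -
    have "c \<in> set Bs" using that Bs by force
    moreover have "dep_edge P A c" using r(1) that unfolding dep_edge_def by force
    then have "c \<in> D" using dc lm_rule.prems unfolding dclosed_def by blast
    ultimately show ?thesis using lm_rule.IH by blast
  qed
  then show ?case using nw r lm_rule.prems by blast
qed

lemma supp_lm:
  assumes "(supp_step P)\<^sup>*\<^sup>* Gs0 Gs" "\<forall>L\<in>set Gs. \<exists>B. L = Neg B \<and> B \<notin> I"
  shows "(\<forall>A. Pos A \<in> set Gs0 \<longrightarrow> A \<in> least_model (reduct P I)) \<and> (\<forall>B. Neg B \<in> set Gs0 \<longrightarrow> B \<notin> I)"
  using assms
proof (induction rule: converse_rtranclp_induct)
  case base
  then show ?case by fastforce
next
  case (step Gs0 Gs1)
  then obtain xs A ys Bs where s: "Gs0 = xs @ Pos A # ys" "(A, Bs) \<in> ground_prog P" "Gs1 = xs @ Bs @ ys"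
    unfolding supp_step_def by blast
  have IH: "(\<forall>A. Pos A \<in> set Gs1 \<longrightarrow> A \<in> least_model (reduct P I)) \<and> (\<forall>B. Neg B \<in> set Gs1 \<longrightarrow> B \<notin> I)"
    using step.IH step.prems by blast
  have "(A, [atom_of L. L \<leftarrow> Bs, \<exists>B. L = Pos B]) \<in> reduct P I"
    unfolding reduct_def using s IH by auto
  moreover have "\<forall>B\<in>set [atom_of L. L \<leftarrow> Bs, \<exists>B. L = Pos B]. B \<in> least_model (reduct P I)"
    using IH s by auto
  ultimately have "A \<in> least_model (reduct P I)" by (rule least_model.lm_rule)
  then show ?case using IH s by auto
qed

lemma supp_dep:
  assumes "(supp_step P)\<^sup>*\<^sup>* Gs0 Gs"
  shows "L \<in> set Gs \<Longrightarrow> \<exists>L0\<in>set Gs0. (dep_edge P)\<^sup>*\<^sup>* (atom_of L0) (atom_of L)"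
  using assms
proof (induction arbitrary: L rule: rtranclp_induct)
  case base
  then show ?case by blast
next
  case (step Gs1 Gs2)
  then obtain xs A ys Bs where s: "Gs1 = xs @ Pos A # ys" "(A, Bs) \<in> ground_prog P" "Gs2 = xs @ Bs @ ys"
    unfolding supp_step_def by blast
  show ?case
  proof (cases "L \<in> set Bs")
    case True
    obtain L0 where L0: "L0 \<in> set Gs0" "(dep_edge P)\<^sup>*\<^sup>* (atom_of L0) A"
      using step.IH[of "Pos A"] s(1) by auto
    have "dep_edge P A (atom_of L)" using s(2) True unfolding dep_edge_def by blast
    then show ?thesis using L0 by (meson rtranclp.rtrancl_into_rtrancl)
  next
    case False
    then have "L \<in> set Gs1" using step.prems s by auto
    then show ?thesis using step.IH by blast
  qed
qed

fun tn :: "nat \<Rightarrow> ('f,'v) trm" where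
  "tn 0 = Fun undefined []"
| "tn (Suc n) = Fun undefined [tn n]"

lemma tn_ground: "vars_trm (tn n) = {}"
  by (induction n) auto

lemma tn_inj: "inj tn"
proof
  fix n m :: nat show "tn n = tn m \<Longrightarrow> n = m"
    by (induction n arbitrary: m) (case_tac m; auto)+
qed

lemma cs_ground:
  fixes B :: "('p,'f,'v) atom"
  assumes fr: "finitely_recursive P" and csf: "counter_supp_fun P CS" and a: "ground_atom a"
    and c: "(K, \<theta>) \<in> CS a" and B: "B \<in> set K"
  shows "vars_atom B = {}"
proof (rule ccontr)
  assume "vars_atom B \<noteq> {}"
  then obtain y where y: "y \<in> vars_atom B" by blast
  define f where "f = (\<lambda>n. subst_atom B (\<lambda>_. tn n))"
  have gen: "gen_counter_support P a (K, \<theta>)" using csf c unfolding counter_supp_fun_def by blast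
  have in_dcl: "f n \<in> {b. (dep_edge P)\<^sup>*\<^sup>* a b}" for n
  proof -
    have "grounding (\<lambda>_. tn n)" by (simp add: grounding_def tn_ground)
    then have "ground_counter_support P ((\<lambda>B. subst_atom B (\<lambda>_. tn n)) ` set K)
          (subst_atom (subst_atom a \<theta>) (\<lambda>_. tn n))"
      using gen unfolding gen_counter_support_def by auto
    moreover have "subst_atom (subst_atom a \<theta>) (\<lambda>_. tn n) = a"
      using a by (simp add: ground_atom_def ground_subst_atom)
    ultimately obtain S where "is_support P a S" "Neg (f n) \<in> S"
      using B unfolding ground_counter_support_def f_def by auto
    then obtain Gs where "(supp_step P)\<^sup>*\<^sup>* [Pos a] Gs" "Neg (f n) \<in> set Gs"
      unfolding is_support_def by blast
    then show ?thesis using supp_dep by fastforce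
  qed
  have "inj f"
  proof
    fix n m assume "f n = f m"
    then have "(tn n :: ('f,'v) trm) = tn m" using y unfolding f_def subst_atom_eq_iff by blast
    then show "n = m" by (rule injD[OF tn_inj])
  qed
  moreover have "finite (range f)"
    using fr a in_dcl unfolding finitely_recursive_def by (meson finite_subset image_subsetI)
  ultimately have "finite (UNIV :: nat set)" using finite_imageD by blast
  then show False by simp
qed




lemma closes_leaf:
  fixes P :: "('p,'f,'v) rule set" and H2 Hg Gg :: "('p,'f,'v) lit list"
  assumes inf: "infinite (UNIV::'v set)" and fr: "finitely_recursive P"
    and csf: "counter_supp_fun P CS" and csc: "cs_complete P CS"
    and dc: "dclosed P D" and Dg: "\<forall>a\<in>D. ground_atom a"
    and comp: "\<forall>M. loc_stable P D M \<longrightarrow> (\<forall>L\<in>set Hg. lit_true M L) \<longrightarrow> (\<forall>L\<in>set Gg. lit_true M L)"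
    and at: "\<forall>L\<in>set Hg \<union> set Gg. atom_of L \<in> D"
    and H2: "vars_lits H2 = {}" "set Hg \<subseteq> set H2" "\<forall>d\<in>D. Pos d \<in> set H2 \<or> Neg d \<in> set H2"
  shows "closes P CS G0 V \<gamma> (Gg, H2)"
proof (cases "\<exists>L\<in>set H2. neg_lit L \<in> set H2")
  case True
  then obtain L where "L \<in> set H2" "neg_lit L \<in> set H2" by blast
  then show ?thesis using closes_incons[OF H2(1)] by blast
next
  case False
  define I where "I = {d\<in>D. Pos d \<in> set H2}"
  have ID: "I \<inter> D = I" by (auto simp: I_def)
  have truth: "lit_true I L \<longleftrightarrow> L \<in> set H2" if LD: "atom_of L \<in> D" for L
  proof (cases L)
    case (Pos d)
    then show ?thesis using LD by (auto simp: I_def)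
  next
    case (Neg d)
    have "d \<in> D" using LD Neg by simp
    moreover have "Neg d \<in> set H2 \<Longrightarrow> Pos d \<notin> set H2" using False by force
    ultimately show ?thesis using Neg H2(3) by (auto simp: I_def)
  qed
  show ?thesis
  proof (cases "loc_stable P D I")
    case True
    have "\<forall>L\<in>set Hg. lit_true I L" using truth at H2(2) by auto
    then have "\<forall>L\<in>set Gg. lit_true I L" using comp True by blast
    then have "\<forall>L\<in>set Gg. L \<in> set H2" using truth at by auto
    then show ?thesis by (rule closes_hyps[OF H2(1)])
  next
    case False2: False
    then obtain a where aD: "a \<in> D" and ne: "(a \<in> I) \<noteq> (a \<in> least_model (reduct P I))"
      using ID unfolding loc_stable_def by auto
    show ?thesis
    proof (cases "a \<in> I")
      case False3: False
      then have alm: "a \<in> least_model (reduct P I)" using ne by blast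
      obtain b Bs0 where w: "(b,Bs0) \<in> ground_prog P" "b \<in> D" "b \<notin> I"
          "\<forall>c. Pos c \<in> set Bs0 \<longrightarrow> c \<in> I" "\<forall>c. Neg c \<in> set Bs0 \<longrightarrow> c \<notin> I"
        using lm_witness[OF dc, of I a] alm aD False3 by blast
      have bN: "Neg b \<in> set H2" using truth[of "Neg b"] w by simp
      have "set Bs0 \<subseteq> set H2"
      proof
        fix L assume L: "L \<in> set Bs0"
        have "dep_edge P b (atom_of L)" using w(1) L unfolding dep_edge_def by blast
        then have "atom_of L \<in> D" using dc w(2) unfolding dclosed_def by blast
        moreover have "lit_true I L" using w L by (cases L) auto
        ultimately show "L \<in> set H2" using truth by blast
      qed
      then show ?thesis using closes_prog[OF inf H2(1) bN w(1)] by blast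
    next
      case True
      then have anl: "a \<notin> least_model (reduct P I)" using ne by blast
      define K where "K = {B. B \<in> I \<and> (\<exists>S. is_support P a S \<and> Neg B \<in> S)}"
      have ga: "ground_atom a" using Dg aD by blast
      have gcs: "ground_counter_support P K a"
        unfolding ground_counter_support_def
      proof (intro conjI)
        show "\<forall>B\<in>K. ground_atom B" using Dg by (auto simp: K_def I_def)
        show "\<forall>B\<in>K. \<exists>S. is_support P a S \<and> Neg B \<in> S" by (auto simp: K_def)
        show "\<forall>S. is_support P a S \<longrightarrow> (\<exists>B\<in>K. Neg B \<in> S)"
        proof (intro allI impI)
          fix S assume sup: "is_support P a S"
          then obtain Gs where Gs: "(supp_step P)\<^sup>*\<^sup>* [Pos a] Gs" "\<forall>L\<in>set Gs. \<exists>B. L = Neg B" "S = set Gs"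
            unfolding is_support_def by blast
          show "\<exists>B\<in>K. Neg B \<in> S"
          proof (rule ccontr)
            assume nb: "\<not> (\<exists>B\<in>K. Neg B \<in> S)"
            have "\<forall>L\<in>set Gs. \<exists>B. L = Neg B \<and> B \<notin> I"
            proof
              fix L assume L: "L \<in> set Gs"
              then obtain B where B: "L = Neg B" using Gs(2) by blast
              have "B \<notin> I"
              proof
                assume "B \<in> I"
                then have "B \<in> K" unfolding K_def using sup L B Gs(3) by blast
                then show False using nb L B Gs(3) by blast
              qed
              then show "\<exists>B. L = Neg B \<and> B \<notin> I" using B by blast
            qed
            then have "a \<in> least_model (reduct P I)" using supp_lm[OF Gs(1)] by simp
            then show False using anl by blast
          qed
        qed
      qed
      have "ground_atom (subst_atom a Var)" using ga by simp
      then obtain c \<sigma> where c: "c \<in> CS a" and img: "(\<lambda>B. subst_atom B \<sigma>) ` set (fst c) = K"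
        using csc gcs unfolding cs_complete_def by (metis subst_atom_Var)
      obtain K' \<theta> where c': "c = (K', \<theta>)" by (cases c) auto
      have cK: "(K', \<theta>) \<in> CS a" using c c' by simp
      have Kg: "\<forall>B\<in>set K'. vars_atom B = {}" using cs_ground[OF fr csf ga cK] by blast
      have "(\<lambda>B. subst_atom B \<sigma>) ` set K' = set K'"
        using Kg by (auto simp: ground_subst_atom)
      then have KK: "set K' = K" using img c' by simp
      have "\<forall>B\<in>set K'. vars_atom B = {} \<and> Pos B \<in> set H2" using Kg KK by (auto simp: K_def I_def)
      moreover have "Pos a \<in> set H2" using True by (simp add: I_def)
      ultimately show ?thesis using closes_fail[where CS=CS and a=a and K=K' and \<theta>=\<theta>, OF H2(1) _ cK] by blast
    qed
  qed
qed




lemma subst_neg_lit[simp]: "subst_lit (neg_lit L) s = neg_lit (subst_lit L s)"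
  by (cases L) auto

lemma comp_Var_left[simp]: "comp_subst Var \<theta> = \<theta>"
  by (rule ext) (simp add: comp_subst_def)

theorem theorem6p9:
  fixes P :: "('p,'f,'v) rule set"
    and CS :: "('p,'f,'v) atom \<Rightarrow> (('p,'f,'v) atom list \<times> ('f,'v) subst) set"
    and G H :: "('p,'f,'v) lit list"
    and \<gamma> :: "('f,'v) subst"
  assumes "infinite (UNIV :: 'v set)"
    and "finitely_recursive P"
    and "counter_supp_fun P CS"
    and "cs_complete P CS"
    and "grounding \<gamma>"
    and "\<forall>M. stable_model P M \<longrightarrow>
           (\<forall>L\<in>set (subst_lits H \<gamma>). lit_true M L) \<longrightarrow> (\<forall>L\<in>set (subst_lits G \<gamma>). lit_true M L)"
  shows "\<exists>\<theta> U \<delta>. (sk_step P CS G)\<^sup>*\<^sup>* ([(G, H)], Var, vars_hgoal (G, H)) ([], \<theta>, U)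
           \<and> (\<forall>x\<in>vars_hgoal (G, H). \<gamma> x = subst_trm (\<theta> x) \<delta>)"
proof -
  note inf = assms(1) and fr = assms(2) and csf = assms(3) and csc = assms(4)
  define V where "V = vars_hgoal (G, H)"
  define Gg where "Gg = subst_lits G \<gamma>"
  define Hg where "Hg = subst_lits H \<gamma>"
  have gam: "\<forall>x. vars_trm (\<gamma> x) = {}" using assms(5) unfolding grounding_def by blast
  have Ggg: "vars_lits Gg = {}" and Hgg: "vars_lits Hg = {}"
    using gam by (auto simp: Gg_def Hg_def vars_subst_lits)
  define D0 where "D0 = atom_of ` (set Hg \<union> set Gg)"
  have D0f: "finite D0" by (simp add: D0_def)
  have D0g: "\<forall>a\<in>D0. ground_atom a"
  proof
    fix a assume "a \<in> D0"
    then obtain L where L: "L \<in> set Hg \<union> set Gg" "a = atom_of L" unfolding D0_def by blast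
    then have "vars_lit L = {}" using Ggg Hgg vars_lits_empty by blast
    then show "ground_atom a" using L by (simp add: ground_atom_def vars_lit_def)
  qed
  have HG: "\<forall>L \<in> set Hg \<union> set Gg. atom_of L \<in> D0" by (simp add: D0_def)
  have ent: "\<forall>M. stable_model P M \<longrightarrow> (\<forall>L\<in>set Hg. lit_true M L) \<longrightarrow> (\<forall>L\<in>set Gg. lit_true M L)"
    using assms(6) by (simp add: Gg_def Hg_def)
  obtain D where D: "finite D" "dclosed P D" "D0 \<subseteq> D" "\<forall>a\<in>D. ground_atom a"
     "\<forall>M. loc_stable P D M \<longrightarrow> (\<forall>L\<in>set Hg. lit_true M L) \<longrightarrow> (\<forall>L\<in>set Gg. lit_true M L)"
    using compactness[OF fr D0f D0g HG ent] by blast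
  obtain ds where ds: "set ds = D" using finite_list[OF D(1)] by blast
  have GV: "vars_lits G \<subseteq> V" by (simp add: V_def)
  have HV: "vars_lits H \<subseteq> V" by (simp add: V_def)
  have clo: "closes P CS G V \<gamma> (Gg, H1)" if H1: "vars_lits H1 = {}" "set Hg \<subseteq> set H1" for H1
  proof (rule closes_split[OF Gg_def Ggg GV])
    show "\<forall>x\<in>V. vars_trm (\<gamma> x) = {}" using gam by blast
    show "vars_lits H1 = {}" by (rule H1(1))
    show "\<forall>d\<in>set ds. vars_atom d = {}" using D(4) ds by (simp add: ground_atom_def)
    fix H2 assume H2: "set H1 \<subseteq> set H2" "vars_lits H2 = {}" "\<forall>d\<in>set ds. Pos d \<in> set H2 \<or> Neg d \<in> set H2"
    show "closes P CS G V \<gamma> (Gg, H2)"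
    proof (rule closes_leaf[OF inf fr csf csc D(2) D(4) D(5)])
      show "\<forall>L\<in>set Hg \<union> set Gg. atom_of L \<in> D" using HG D(3) by blast
      show "vars_lits H2 = {}" by (rule H2(2))
      show "set Hg \<subseteq> set H2" using H1(2) H2(1) by blast
      show "\<forall>d\<in>D. Pos d \<in> set H2 \<or> Neg d \<in> set H2" using H2(3) ds by blast
    qed
  qed
  have Vf: "finite V" by (simp add: V_def)
  obtain xs where xs: "set xs = V" using finite_list[OF Vf] by blast
  define Lv :: "('p,'f,'v) lit" where "Lv = Pos (Atom undefined (map Var xs))"
  define Lg where "Lg = subst_lit Lv \<gamma>"
  define \<theta> where "\<theta> = matcher Lv \<gamma>"
  have vLv: "vars_lit Lv = V" by (auto simp: Lv_def vars_lit_def xs)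
  have gLg: "vars_lit (subst_lit Lv \<gamma>) = {}" using gam by (simp add: vars_subst_lit)
  have \<theta>V: "\<forall>x\<in>V. \<theta> x = \<gamma> x" by (simp add: \<theta>_def matcher_def vLv)
  have sG: "subst_lits G \<theta> = Gg" using \<theta>V GV by (auto simp: subst_lits_eq_iff Gg_def)
  have sH: "subst_lits H \<theta> = Hg" using \<theta>V HV by (auto simp: subst_lits_eq_iff Hg_def)
  have sLv: "subst_lit Lv \<theta> = Lg" using \<theta>V vLv by (auto simp: subst_lit_eq_iff Lg_def)
  have sLg: "subst_lit Lg \<theta> = Lg" using gLg by (simp add: Lg_def ground_subst_lit)
  have mgu: "is_mgu_lit \<theta> Lg Lv"
    using is_mgu_sym[OF matcher_mgu[OF gLg]] by (simp add: \<theta>_def Lg_def)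
  define U1 where "U1 = V \<union> vars_sgoal [(G, H@[Lv]), (G, H@[neg_lit Lv])]"
  have s1: "sk_step P CS G ([(G,H)], Var, V) ([(G, H@[Lv]), (G, H@[neg_lit Lv])], Var, U1)"
    using step_split[of P CS G G H "[]" Var V Lv] by (simp add: U1_def)
  define S2 where "S2 = [(G, H@[Lv]@[Lg]), (G, H@[Lv]@[neg_lit Lg]), (G, H@[neg_lit Lv])]"
  define U2 where "U2 = U1 \<union> vars_sgoal S2"
  have s2: "sk_step P CS G ([(G, H@[Lv]), (G, H@[neg_lit Lv])], Var, U1) (S2, Var, U2)"
    using step_split[of P CS G G "H@[Lv]" "[(G, H@[neg_lit Lv])]" Var U1 Lg] by (simp add: U2_def S2_def)
  define S3 where "S3 = [(G, H@[Lv]@[Lg])] @ ([neg_lit (neg_lit Lg)], H@[Lv]@[neg_lit Lg]) # [(G, H@[neg_lit Lv])]"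
  have s3: "sk_step P CS G ([(G, H@[Lv]@[Lg])] @ (G, H@[Lv]@[neg_lit Lg]) # [(G, H@[neg_lit Lv])], Var, U2)
      (S3, Var, U2 \<union> vars_sgoal S3)"
    by (rule sk_step.contradiction[where L="neg_lit Lg"]) (simp_all add: S3_def)
  define S4 where "S4 = subst_sgoal ([(G, H@[Lv]@[Lg])] @ ([] @ [], H@[Lv]@[neg_lit Lg]) # [(G, H@[neg_lit Lv])]) \<theta>"
  have s4: "sk_step P CS G ([(G, H@[Lv]@[Lg])] @ ([] @ Lg # [], H@[Lv]@[neg_lit Lg]) # [(G, H@[neg_lit Lv])], Var, U2 \<union> vars_sgoal S3)
      (S4, comp_subst Var \<theta>, U2 \<union> vars_sgoal S3 \<union> vars_sgoal S4)"
    by (rule sk_step.res_hyp[where L'=Lv]) (simp_all add: S4_def mgu)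
  have S4eq: "S4 = [(Gg, Hg@[Lg]@[Lg])] @ ([], Hg@[Lg]@[neg_lit Lg]) # [(Gg, Hg@[neg_lit Lg])]"
    by (simp add: S4_def sG sH sLv sLg)
  define U4 where "U4 = U2 \<union> vars_sgoal S3 \<union> vars_sgoal S4"
  have s5: "sk_step P CS G ([(Gg, Hg@[Lg]@[Lg])] @ ([], Hg@[Lg]@[neg_lit Lg]) # [(Gg, Hg@[neg_lit Lg])], \<theta>, U4)
      ([(Gg, Hg@[Lg]@[Lg])] @ [(Gg, Hg@[neg_lit Lg])], \<theta>, U4)"
    by (rule sk_step.success)
  define U3 where "U3 = U2 \<union> vars_sgoal S3"
  define S5 where "S5 = [(Gg, Hg@[Lg]@[Lg]), (Gg, Hg@[neg_lit Lg])]"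
  have s3': "sk_step P CS G (S2, Var, U2) (S3, Var, U3)" using s3 unfolding S2_def U3_def by simp
  have s4': "sk_step P CS G (S3, Var, U3) (S4, \<theta>, U4)" using s4 unfolding S3_def U3_def U4_def by simp
  have s5': "sk_step P CS G (S4, \<theta>, U4) (S5, \<theta>, U4)" using s5 unfolding S4eq S5_def by simp
  have r05: "(sk_step P CS G)\<^sup>*\<^sup>* ([(G,H)], Var, V) (S5, \<theta>, U4)"
  proof -
    let ?r = "sk_step P CS G"
    have a5: "?r\<^sup>*\<^sup>* (S4, \<theta>, U4) (S5, \<theta>, U4)" using s5' by (rule r_into_rtranclp)
    have a4: "?r\<^sup>*\<^sup>* (S3, Var, U3) (S5, \<theta>, U4)"
      by (rule converse_rtranclp_into_rtranclp[where r="?r", OF s4' a5])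
    have a3: "?r\<^sup>*\<^sup>* (S2, Var, U2) (S5, \<theta>, U4)"
      by (rule converse_rtranclp_into_rtranclp[where r="?r", OF s3' a4])
    have a2: "?r\<^sup>*\<^sup>* ([(G, H@[Lv]), (G, H@[neg_lit Lv])], Var, U1) (S5, \<theta>, U4)"
      by (rule converse_rtranclp_into_rtranclp[where r="?r", OF s2 a3])
    show ?thesis by (rule converse_rtranclp_into_rtranclp[where r="?r", OF s1 a2])
  qed
  have U4f: "finite U4" by (simp add: U4_def U2_def U1_def Vf)
  have gLg': "vars_lit Lg = {}" using gLg by (simp add: Lg_def)
  have H1g: "vars_lits (Hg@[Lg]@[Lg]) = {}" using Hgg gLg' by simp
  have H2g: "vars_lits (Hg@[neg_lit Lg]) = {}" using Hgg gLg' by simp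
  have Dg: "vars_sgoal [(Gg, Hg@[neg_lit Lg])] = {}" using Ggg H2g by simp
  have H1s: "set Hg \<subseteq> set (Hg@[Lg]@[Lg])" by auto
  have "\<exists>\<sigma>' U'. (sk_step P CS G)\<^sup>*\<^sup>* ((Gg, Hg@[Lg]@[Lg]) # [(Gg, Hg@[neg_lit Lg])], \<theta>, U4)
        ([(Gg, Hg@[neg_lit Lg])], \<sigma>', U')"
    using clo[OF H1g H1s, unfolded closes_def, rule_format, OF Dg U4f] \<theta>V by blast
  then obtain \<sigma>1 U5 where r6: "(sk_step P CS G)\<^sup>*\<^sup>* (S5, \<theta>, U4)
        ([(Gg, Hg@[neg_lit Lg])], \<sigma>1, U5)" unfolding S5_def by blast
  have p1: "finite U5 \<and> (\<forall>x. vars_trm (\<theta> x) = {} \<longrightarrow> \<sigma>1 x = \<theta> x)" by (rule steps_pres[OF r6 U4f])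
  have inv1: "\<forall>x\<in>V. \<sigma>1 x = \<gamma> x" using p1 \<theta>V gam by auto
  have H2s: "set Hg \<subseteq> set (Hg@[neg_lit Lg])" by auto
  have D0': "vars_sgoal ([]::('p,'f,'v) sgoal) = {}" by simp
  have "\<exists>\<sigma>' U'. (sk_step P CS G)\<^sup>*\<^sup>* ([(Gg, Hg@[neg_lit Lg])], \<sigma>1, U5) ([], \<sigma>', U')"
    using clo[OF H2g H2s, unfolded closes_def, rule_format, OF D0'] inv1 p1 by blast
  then obtain \<sigma>2 U6 where r7: "(sk_step P CS G)\<^sup>*\<^sup>* ([(Gg, Hg@[neg_lit Lg])], \<sigma>1, U5) ([], \<sigma>2, U6)"
    by blast
  have p2: "finite U6 \<and> (\<forall>x. vars_trm (\<sigma>1 x) = {} \<longrightarrow> \<sigma>2 x = \<sigma>1 x)" using steps_pres[OF r7] p1 by blast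
  have inv2: "\<forall>x\<in>V. \<sigma>2 x = \<gamma> x" using p2 inv1 gam by auto
  have "(sk_step P CS G)\<^sup>*\<^sup>* ([(G,H)], Var, V) ([], \<sigma>2, U6)"
    using rtranclp_trans[OF r05 rtranclp_trans[OF r6 r7]] .
  moreover have "\<forall>x\<in>V. \<gamma> x = subst_trm (\<sigma>2 x) Var" using inv2 by simp
  ultimately show ?thesis unfolding V_def by blast
qed


end
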